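(* Let $M_1>0$, $M_2>0$. Let $F(z)=\bar{z}G(z)+H(z)$, $z\in\mathbb{D}$, where $G,H$ are analytic in $\mathbb{D}$, $G\not\equiv 0$, $G(0)=H(0)=0$, $G'(0)=H'(0)=1$, $|G(z)|\leq M_1$ and $|H(z)|\leq M_2$ for all $z\in\mathbb{D}$. Let $\rho_3$ be the unique root in $(0,1)$ of the equation $$1-\Big(M_2-\frac{1}{M_2}\Big)\frac{2r-r^2}{(1-r)^2}-\Big(M_1-\frac{1}{M_1}\Big)\frac{(3-2r)r^2}{(1-r)^2}-2r=0.$$ Then $F$ is sense-preserving, univalent and fully starlike in $\mathbb{D}_{\rho_3}$.
   Context: $\mathbb{D}=\{z:|z|<1\}$, $\mathbb{D}_r=\{z:|z|<r\}$. For a continuously differentiable $F$, $F_z=\frac12(F_x-iF_y)$, $F_{\bar z}=\frac12(F_x+iF_y)$, and the Jacobian is $J_F=|F_z|^2-|F_{\bar z}|^2$; $F$ is sense-preserving on a domain if $J_F>0$ there. $F$ is fully starlike in $\mathbb{D}_r$ if it is sense-preserving there, $F(0)=0$, $F(z)\neq 0$ for $z\in\mathbb{D}_r\setminus\{0\}$, and for each $s\in(0,r)$ the curve $t\mapsto F(se^{it})$ is starlike with respect to the origin, i.e. $\mathrm{Re}\big((zF_z(z)-\bar zF_{\bar z}(z))/F(z)\big)>0$ for all $|z|=s$. *)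

theory Defs
  imports "HOL-Analysis.Analysis"
begin

definition wirt_z :: "(complex \<Rightarrow> complex) \<Rightarrow> complex \<Rightarrow> complex" where
  "wirt_z F z = (frechet_derivative F (at z) 1 - \<i> * frechet_derivative F (at z) \<i>) / 2"

definition wirt_zbar :: "(complex \<Rightarrow> complex) \<Rightarrow> complex \<Rightarrow> complex" where
  "wirt_zbar F z = (frechet_derivative F (at z) 1 + \<i> * frechet_derivative F (at z) \<i>) / 2"

definition jacobian :: "(complex \<Rightarrow> complex) \<Rightarrow> complex \<Rightarrow> real" where
  "jacobian F z = (cmod (wirt_z F z))\<^sup>2 - (cmod (wirt_zbar F z))\<^sup>2"

definition sense_preserving_on :: "(complex \<Rightarrow> complex) \<Rightarrow> complex set \<Rightarrow> bool" where
  "sense_preserving_on F S \<longleftrightarrow> (\<forall>z\<in>S. F differentiable (at z) \<and> jacobian F z > 0)"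

definition fully_starlike_in :: "(complex \<Rightarrow> complex) \<Rightarrow> real \<Rightarrow> bool" where
  "fully_starlike_in F r \<longleftrightarrow>
     sense_preserving_on F (ball 0 r) \<and> F 0 = 0 \<and>
     (\<forall>z\<in>ball 0 r - {0}. F z \<noteq> 0) \<and>
     (\<forall>s\<in>{0<..<r}. \<forall>z. cmod z = s \<longrightarrow>
        Re ((z * wirt_z F z - cnj z * wirt_zbar F z) / F z) > 0)"

definition rho3_eq :: "real \<Rightarrow> real \<Rightarrow> real \<Rightarrow> real" where
  "rho3_eq M1 M2 r = 1 - (M2 - 1 / M2) * ((2 * r - r\<^sup>2) / (1 - r)\<^sup>2)
                       - (M1 - 1 / M1) * ((3 - 2 * r) * r\<^sup>2 / (1 - r)\<^sup>2) - 2 * r"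

end

theory Submission
  imports Defs "HOL-Complex_Analysis.Complex_Analysis"
begin

lemma coeff_le_M:
  fixes f :: "complex \<Rightarrow> complex"
  assumes holf: "f holomorphic_on ball 0 1" and bd: "\<forall>z\<in>ball 0 1. norm (f z) \<le> M"
  shows "norm ((deriv ^^ n) f 0 / fact n) \<le> M"
proof -
  have le: "norm ((deriv ^^ n) f 0 / fact n) \<le> M / r^n" if r: "0 < r" "r < 1" for r
  proof -
    have sub: "cball 0 r \<subseteq> ball (0::complex) 1" using r by auto
    have "norm ((deriv ^^ n) f 0) \<le> fact n * M / r^n"
    proof (rule Cauchy_inequality[where r=r])
      show "f holomorphic_on ball 0 r" using holomorphic_on_subset[OF holf] sub ball_subset_cball by blast
      show "continuous_on (cball 0 r) f"
        using holomorphic_on_imp_continuous_on[OF holf] continuous_on_subset sub by blast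
      show "0 < r" by fact
      show "norm (f x) \<le> M" if "norm (0 - x) = r" for x using that bd r by auto
    qed
    then show ?thesis by (simp add: norm_divide field_simps)
  qed
  have "((\<lambda>r. M / r^n) \<longlongrightarrow> M / 1^n) (at_left (1::real))" by (intro tendsto_intros) auto
  moreover have "eventually (\<lambda>r. norm ((deriv ^^ n) f 0 / fact n) \<le> M / r^n) (at_left (1::real))"
    by (rule eventually_mono[OF eventually_at_left_real[of "0::real" 1]]) (use le in auto)
  ultimately show ?thesis
    using tendsto_le[of "at_left (1::real)" "\<lambda>r. M / r^n" "M" "\<lambda>_. norm ((deriv ^^ n) f 0 / fact n)"] by simp
qed

lemma schwarz_M:
  fixes f :: "complex \<Rightarrow> complex"
  assumes holf: "f holomorphic_on ball 0 1" and f0: "f 0 = 0"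
    and bd: "\<forall>z\<in>ball 0 1. norm (f z) \<le> M" and z: "norm z < 1"
  shows "norm (f z) \<le> M * norm z"
proof (rule ccontr)
  assume "\<not> ?thesis"
  hence lt: "M * norm z < norm (f z)" by simp
  have M0: "M \<ge> 0" using bd by (metis centre_in_ball norm_ge_zero order_trans zero_less_one)
  have fz: "norm (f z) > 0" using lt M0 by (smt (verit) mult_nonneg_nonneg norm_ge_zero)
  have Mpos: "M > 0"
  proof (rule ccontr)
    assume "\<not> M > 0" then have "M = 0" using M0 by simp
    then show False using bd z fz by auto
  qed
  define s where "s = (M * norm z / norm (f z) + 1) / 2"
  have q0: "M * norm z / norm (f z) \<ge> 0" using M0 by simp
  have q1: "M * norm z / norm (f z) < 1" using lt fz by simp
  have s1: "s < 1" "0 < s" using q0 q1 by (auto simp: s_def)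
  have ss: "s * norm (f z) > M * norm z" using lt fz by (simp add: s_def field_simps)
  define g where "g = (\<lambda>w. complex_of_real (s / M) * f w)"
  have "norm (g z) \<le> norm z"
  proof (rule Schwarz_Lemma(1))
    show "g holomorphic_on ball 0 1" unfolding g_def by (intro holomorphic_intros holf)
    show "g 0 = 0" by (simp add: g_def f0)
    show "norm (g w) < 1" if "norm w < 1" for w
    proof -
      have "norm (f w) \<le> M" using bd that by auto
      then have "s / M * norm (f w) \<le> s / M * M" using s1 Mpos by (intro mult_left_mono) auto
      also have "\<dots> < 1" using s1 Mpos by simp
      finally show ?thesis using s1 Mpos by (simp add: g_def norm_mult norm_divide abs_of_pos field_simps)
    qed
    show "norm z < 1" by fact
  qed
  then have "s / M * norm (f z) \<le> norm z" using s1 Mpos by (simp add: g_def norm_mult norm_divide abs_of_pos field_simps)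
  then have "s * norm (f z) \<le> M * norm z" using Mpos by (simp add: field_simps)
  then show False using ss by simp
qed


lemma moebius_sq:
  fixes u c :: complex
  shows "(cmod (1 - cnj c * u))^2 - (cmod (u - c))^2 = (1 - (cmod u)^2) * (1 - (cmod c)^2)"
  unfolding cmod_power2 by (simp add: algebra_simps power2_eq_square)

lemma moebius_lt:
  fixes u c :: complex
  assumes "cmod u < 1" "cmod c < 1"
  shows "cmod (u - c) < cmod (1 - cnj c * u)"
proof -
  have "(1 - (cmod u)^2) * (1 - (cmod c)^2) > 0"
    using assms by (intro mult_pos_pos) (auto simp: power_less_one_iff abs_square_less_1)
  then have "(cmod (u - c))^2 < (cmod (1 - cnj c * u))^2" using moebius_sq[of c u] by linarith
  then show ?thesis by (rule power_less_imp_less_base) simp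
qed

lemma schwarz_pick0:
  fixes g :: "complex \<Rightarrow> complex"
  assumes holg: "g holomorphic_on ball 0 1" and bd: "\<forall>w\<in>ball 0 1. norm (g w) \<le> 1"
  shows "norm (deriv g 0) \<le> 1 - (norm (g 0))^2"
proof -
  have key: "s * norm (deriv g 0) \<le> 1 - s^2 * (norm (g 0))^2" if s: "0<s" "s<1" for s
  proof -
    define c where "c = of_real s * g 0"
    have ng: "norm (of_real s * g w) < 1" if "w \<in> ball 0 1" for w
    proof -
      have "norm (of_real s * g w) = s * norm (g w)" using s by (simp add: norm_mult)
      also have "\<dots> \<le> s * 1" using bd that s by (intro mult_left_mono) auto
      finally show ?thesis using s by simp
    qed
    have nc: "norm c < 1" unfolding c_def using ng[of 0] by simp
    define h where "h = (\<lambda>w. (of_real s * g w - c) / (1 - cnj c * (of_real s * g w)))"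
    have den: "1 - cnj c * (of_real s * g w) \<noteq> 0" if "w \<in> ball 0 1" for w
    proof
      assume "1 - cnj c * (of_real s * g w) = 0"
      then have "cnj c * (of_real s * g w) = 1" by simp
      then have "norm (cnj c) * norm (of_real s * g w) = 1" by (metis norm_mult norm_one)
      moreover have "norm (cnj c) * norm (of_real s * g w) < 1 * 1"
        using nc ng[OF that] by (intro mult_strict_mono') auto
      ultimately show False by simp
    qed
    have holh: "h holomorphic_on ball 0 1" unfolding h_def
      using den by (intro holomorphic_intros holg) auto
    have h0: "h 0 = 0" by (simp add: h_def c_def)
    have hlt: "norm (h w) < 1" if "norm w < 1" for w
    proof -
      have w: "w \<in> ball 0 1" using that by simp
      have "norm (of_real s * g w - c) < norm (1 - cnj c * (of_real s * g w))"
        by (rule moebius_lt[OF ng[OF w] nc])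
      then show ?thesis using den[OF w] by (simp add: h_def norm_divide divide_less_eq)
    qed
    have "norm (deriv h 0) \<le> 1" by (rule Schwarz_Lemma(2)[OF holh h0 hlt, of 0]) auto
    moreover have "deriv h 0 = of_real s * deriv g 0 / (1 - cnj c * c)"
    proof -
      have dg: "(g has_field_derivative deriv g 0) (at 0)"
        using holg by (intro holomorphic_derivI[of _ "ball 0 1"]) auto
      have d0: "1 - cnj c * c \<noteq> 0" using den[of 0] by (simp add: c_def)
      have "(h has_field_derivative
         ((of_real s * deriv g 0) * (1 - cnj c * (of_real s * g 0)) - (of_real s * g 0 - c) * (- (cnj c * (of_real s * deriv g 0))))
          / (1 - cnj c * (of_real s * g 0))^2) (at 0)"
        unfolding h_def using den[of 0]
        by (auto intro!: derivative_eq_intros dg simp: power2_eq_square)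
      then have "deriv h 0 = ((of_real s * deriv g 0) * (1 - cnj c * (of_real s * g 0)) - (of_real s * g 0 - c) * (- (cnj c * (of_real s * deriv g 0))))
          / (1 - cnj c * (of_real s * g 0))^2" by (rule DERIV_imp_deriv)
      also have "\<dots> = of_real s * deriv g 0 / (1 - cnj c * c)"
        using d0 by (simp add: c_def[symmetric] power2_eq_square)
      finally show ?thesis .
    qed
    moreover have "cnj c * c = of_real ((norm c)^2)" using complex_norm_square[of c] by (simp add: mult.commute)
    moreover have q1: "(norm c)^2 < 1" using nc by (simp add: abs_square_less_1)
    ultimately have "norm (deriv h 0) = s * norm (deriv g 0) / (1 - (norm c)^2)"
    proof -
      have e: "1 - cnj c * c = of_real (1 - (norm c)^2)" using \<open>cnj c * c = of_real ((norm c)^2)\<close> by simp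
      have "norm (deriv h 0) = norm (of_real s * deriv g 0) / norm (of_real (1 - (norm c)^2) :: complex)"
        using \<open>deriv h 0 = _\<close> unfolding e by (simp only: norm_divide)
      also have "\<dots> = s * norm (deriv g 0) / \<bar>1 - (norm c)^2\<bar>" using s by (simp only: norm_mult norm_of_real abs_of_pos)
      finally show ?thesis using q1 by simp
    qed
    with \<open>norm (deriv h 0) \<le> 1\<close> have "s * norm (deriv g 0) / (1 - (norm c)^2) \<le> 1" by simp
    moreover have "norm c = s * norm (g 0)" using s by (simp add: c_def norm_mult)
    ultimately have "s * norm (deriv g 0) / (1 - (s * norm (g 0))^2) \<le> 1" by simp
    moreover have "1 - (s * norm (g 0))^2 > 0" using nc \<open>norm c = s * norm (g 0)\<close>
      using s by (simp add: abs_square_less_1 abs_of_nonneg)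
    ultimately show ?thesis by (simp add: divide_le_eq power_mult_distrib)
  qed
  define L where "L = norm (deriv g 0) - (1 - (norm (g 0))^2)"
  have lim: "((\<lambda>s. s * norm (deriv g 0) - (1 - s^2 * (norm (g 0))^2)) \<longlongrightarrow>
        1 * norm (deriv g 0) - (1 - 1^2 * (norm (g 0))^2)) (at_left (1::real))"
    by (intro tendsto_intros)
  have ev: "eventually (\<lambda>s. s * norm (deriv g 0) - (1 - s^2 * (norm (g 0))^2) \<le> 0) (at_left (1::real))"
    by (rule eventually_mono[OF eventually_at_left_real[of "0::real" 1]]) (use key in auto)
  have "1 * norm (deriv g 0) - (1 - 1^2 * (norm (g 0))^2) \<le> 0"
    by (rule tendsto_le[OF _ tendsto_const lim ev]) simp
  then show ?thesis by simp
qed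


lemma root_unity_sum:
  fixes k n :: nat
  assumes k: "k > 0"
  shows "(\<Sum>j<k. (exp (2 * of_real pi * \<i> / of_nat k) ^ n) ^ j) = (if k dvd n then of_nat k else (0::complex))"
proof -
  define \<omega> where "\<omega> = exp (2 * of_real pi * \<i> / of_nat k)"
  have wk: "\<omega> ^ k = 1"
  proof -
    have "\<omega> ^ k = exp (of_nat k * (2 * of_real pi * \<i> / of_nat k))" unfolding \<omega>_def by (rule exp_of_nat_mult[symmetric])
    also have "\<dots> = exp (2 * of_real pi * \<i>)" using k by simp
    finally show ?thesis by simp
  qed
  show ?thesis
  proof (cases "k dvd n")
    case True
    then obtain m where "n = k * m" by blast
    then have "\<omega> ^ n = 1" by (simp add: power_mult wk)
    then show ?thesis using True unfolding \<omega>_def[symmetric] by simp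
  next
    case False
    have ne: "\<omega> ^ n \<noteq> 1"
    proof
      assume "\<omega> ^ n = 1"
      moreover have "\<omega> ^ n = exp (of_nat n * (2 * of_real pi * \<i> / of_nat k))" unfolding \<omega>_def by (rule exp_of_nat_mult[symmetric])
      ultimately have "exp (of_nat n * (2 * of_real pi * \<i> / of_nat k)) = 1" by simp
      then obtain m :: int where "Im (of_nat n * (2 * of_real pi * \<i> / of_nat k)) = of_int (2 * m) * pi"
        unfolding exp_eq_1 by blast
      then have "real n * (2 * pi) / real k = of_int (2 * m) * pi" by simp
      then have "real n = real k * of_int m" using k by (simp add: field_simps)
      then have "int n = int k * m" by (metis of_int_eq_iff of_int_mult of_int_of_nat_eq)
      then have "int k dvd int n" by simp
      then show False using False by simp
    qed
    have "(\<omega> ^ n) ^ k = 1" by (simp add: power_mult[symmetric] mult.commute power_mult wk)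
    then show ?thesis using False ne unfolding \<omega>_def[symmetric] by (simp add: sum_gp_strict)
  qed
qed


lemma coeff_bound:
  fixes f :: "complex \<Rightarrow> complex"
  assumes holf: "f holomorphic_on ball 0 1" and f0: "f 0 = 0" and f1: "deriv f 0 = 1"
    and bd: "\<forall>z\<in>ball 0 1. norm (f z) \<le> M" and n: "n \<ge> 2"
  shows "norm ((deriv ^^ n) f 0 / fact n) \<le> M - 1/M"
proof -
  define a where "a = (\<lambda>n. (deriv ^^ n) f 0 / fact n)"
  have abd: "norm (a i) \<le> M" for i unfolding a_def by (rule coeff_le_M[OF holf bd])
  have a0: "a 0 = 0" by (simp add: a_def f0)
  have a1: "a 1 = 1" by (simp add: a_def f1)
  have M1: "M \<ge> 1" using abd[of 1] a1 by simp
  define k where "k = n - 1"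
  have k: "k > 0" "n = Suc k" using n by (auto simp: k_def)
  define b where "b = (\<lambda>m. a (Suc (m * k)))"
  have sb: "summable (\<lambda>m. b m * w^m)" if "norm w < 1" for w
  proof (rule summable_comparison_test)
    show "\<exists>N. \<forall>m\<ge>N. norm (b m * w^m) \<le> M * norm w ^ m"
      by (intro exI[of _ 0] allI impI) (simp add: norm_mult norm_power abd mult_right_mono b_def)
    show "summable (\<lambda>m. M * norm w ^ m)" using that by (intro summable_mult summable_geometric) simp
  qed
  define S where "S = (\<lambda>w. \<Sum>m. b m * w^m)"
  have dS: "(S has_field_derivative (\<Sum>m. diffs b m * w^m)) (at w)" if "norm w < 1" for w
    unfolding S_def by (rule termdiffs_strong'[of 1]) (use sb that in auto)
  have holS: "S holomorphic_on ball 0 1"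
    using dS by (subst holomorphic_on_open) (auto, metis)
  define \<psi> where "\<psi> = (\<lambda>w. S w / of_real M)"
  have hol\<psi>: "\<psi> holomorphic_on ball 0 1" unfolding \<psi>_def using M1 by (intro holomorphic_intros holS) auto
  have S0: "S 0 = 1" using a1 by (simp add: S_def b_def)
  have dS0: "deriv \<psi> 0 = b 1 / of_real M"
  proof -
    have "(\<psi> has_field_derivative (\<Sum>m. diffs b m * 0^m) / of_real M) (at 0)"
      unfolding \<psi>_def using M1 by (auto intro!: derivative_eq_intros dS)
    then have "deriv \<psi> 0 = (\<Sum>m. diffs b m * 0^m) / of_real M" by (rule DERIV_imp_deriv)
    then show ?thesis by (simp add: diffs_def)
  qed
  have ser: "(\<lambda>i. a (Suc i) * u^i) sums (f u / u)" if "norm u < 1" "u \<noteq> 0" for u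
  proof -
    have "(\<lambda>i. a i * u^i) sums f u"
      using holomorphic_power_series[OF holf, of u] that by (simp add: a_def)
    then have "(\<lambda>i. a (Suc i) * u^(Suc i)) sums f u"
      using sums_Suc_iff[of "\<lambda>i. a i * u^i" "f u"] a0 by simp
    from sums_divide[OF this, of u] show ?thesis using that by (simp add: field_simps)
  qed
  define \<omega> where "\<omega> = exp (2 * of_real pi * \<i> / of_nat k)"
  have nw: "norm \<omega> = 1" by (simp add: \<omega>_def norm_exp_eq_Re)
  have Sz: "S (z^k) = (1 / of_nat k) * (\<Sum>j<k. f (\<omega>^j * z) / (\<omega>^j * z))" if z: "norm z < 1" "z \<noteq> 0" for z
  proof -
    have "(\<lambda>i. \<Sum>j<k. a (Suc i) * (\<omega>^j * z)^i) sums (\<Sum>j<k. f (\<omega>^j * z) / (\<omega>^j * z))"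
      by (rule sums_sum, rule ser) (use z nw in \<open>auto simp: norm_mult norm_power\<close>)
    moreover have "(\<Sum>j<k. a (Suc i) * (\<omega>^j * z)^i) = a (Suc i) * z^i * (\<Sum>j<k. (\<omega>^i)^j)" for i
      by (simp add: sum_distrib_left power_mult_distrib mult_ac flip: power_mult)
    ultimately have "(\<lambda>i. a (Suc i) * z^i * (\<Sum>j<k. (\<omega>^i)^j)) sums (\<Sum>j<k. f (\<omega>^j * z) / (\<omega>^j * z))"
      by simp
    from sums_mult[OF this, of "1 / of_nat k"]
    have "(\<lambda>i. if k dvd i then a (Suc i) * z^i else 0) sums ((1 / of_nat k) * (\<Sum>j<k. f (\<omega>^j * z) / (\<omega>^j * z)))"
      using k unfolding \<omega>_def by (simp add: root_unity_sum[OF k(1)] if_distrib cong: if_cong)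
    then have "(\<lambda>m. if k dvd (m * k) then a (Suc (m * k)) * z^(m * k) else 0) sums ((1 / of_nat k) * (\<Sum>j<k. f (\<omega>^j * z) / (\<omega>^j * z)))"
    proof (subst sums_mono_reindex[where g = "\<lambda>m. m * k"])
      show "strict_mono (\<lambda>m. m * k)" using k by (auto simp: strict_mono_def)
      have "i \<in> range (\<lambda>m. m * k)" if "k dvd i" for i
        using that by (auto elim!: dvdE simp: mult.commute image_iff)
      then show "\<And>i. i \<notin> range (\<lambda>m. m * k) \<Longrightarrow> (if k dvd i then a (Suc i) * z^i else 0) = 0" by auto
    qed
    then have "(\<lambda>m. b m * (z^k)^m) sums ((1 / of_nat k) * (\<Sum>j<k. f (\<omega>^j * z) / (\<omega>^j * z)))"
      by (simp add: b_def mult.commute flip: power_mult)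
    then show ?thesis unfolding S_def by (rule sums_unique[symmetric])
  qed
  have bdS: "norm (S w) \<le> M" if w: "norm w < 1" for w
  proof (cases "w = 0")
    case True then show ?thesis using S0 M1 by simp
  next
    case False
    define z where "z = exp (Ln w / of_nat k)"
    have zk: "z^k = w" unfolding z_def using k False by (simp flip: exp_of_nat_mult)
    have "norm z = exp (ln (norm w) / real k)" using False by (simp add: z_def norm_exp_eq_Re)
    moreover have "ln (norm w) < 0" using w False by simp
    ultimately have nz: "norm z < 1" using k by (simp add: divide_neg_pos)
    have z0: "z \<noteq> 0" by (simp add: z_def)
    have each: "norm (f (\<omega>^j * z) / (\<omega>^j * z)) \<le> M" for j
    proof -
      have nu: "norm (\<omega>^j * z) = norm z" by (simp add: norm_mult norm_power nw)
      have "norm (f (\<omega>^j * z)) \<le> M * norm (\<omega>^j * z)"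
        by (rule schwarz_M[OF holf f0 bd]) (use nu nz in simp)
      then show ?thesis using nu z0 by (simp add: norm_divide divide_le_eq)
    qed
    have "norm (S w) = norm ((1 / of_nat k) * (\<Sum>j<k. f (\<omega>^j * z) / (\<omega>^j * z)))"
      using Sz[OF nz z0] zk by simp
    also have "\<dots> \<le> (1 / real k) * (\<Sum>j<k. norm (f (\<omega>^j * z) / (\<omega>^j * z)))"
    proof -
      have "norm (\<Sum>j<k. f (\<omega>^j * z) / (\<omega>^j * z)) \<le> (\<Sum>j<k. norm (f (\<omega>^j * z) / (\<omega>^j * z)))"
        by (rule norm_sum)
      then show ?thesis using k by (simp add: norm_divide divide_right_mono)
    qed
    also have "\<dots> \<le> (1 / real k) * (\<Sum>j<k. M)"
      by (intro mult_left_mono sum_mono each) auto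
    also have "\<dots> = M" using k by simp
    finally show ?thesis .
  qed
  have "norm (deriv \<psi> 0) \<le> 1 - (norm (\<psi> 0))^2"
  proof (rule schwarz_pick0[OF hol\<psi>])
    show "\<forall>w\<in>ball 0 1. norm (\<psi> w) \<le> 1"
      using bdS M1 by (auto simp: \<psi>_def norm_divide divide_le_eq)
  qed
  moreover have "norm (\<psi> 0) = 1 / M" using S0 M1 by (simp add: \<psi>_def norm_divide)
  ultimately have "norm (b 1) / M \<le> 1 - (1 / M)^2" using M1 unfolding dS0 by (simp add: norm_divide)
  then have "norm (b 1) \<le> M * (1 - (1/M)^2)" using M1 by (simp add: divide_le_eq mult.commute)
  also have "\<dots> = M - 1/M" using M1 by (simp add: field_simps power2_eq_square)
  finally show ?thesis using k by (simp add: b_def a_def)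
qed


lemma n_pow_sums:
  fixes r :: real assumes "0 \<le> r" "r < 1"
  shows "(\<lambda>n. real n * r^n) sums (r / (1 - r)^2)"
proof -
  have "(\<lambda>n. real (Suc n) * r^n) sums (1 / (1 - r)^2)" using geometric_deriv_sums[of r] assms by simp
  from sums_mult[OF this, of r] have "(\<lambda>n. real (Suc n) * r^(Suc n)) sums (r / (1 - r)^2)"
    by (simp add: mult_ac)
  then show ?thesis using sums_Suc_iff[of "\<lambda>n. real n * r^n"] by simp
qed

lemma est:
  fixes f :: "complex \<Rightarrow> complex" and \<alpha> \<beta> :: real
  assumes holf: "f holomorphic_on ball 0 1" and f0: "f 0 = 0" and f1: "deriv f 0 = 1"
    and bd: "\<forall>z\<in>ball 0 1. norm (f z) \<le> M" and z: "norm z < 1"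
    and \<beta>: "\<beta> \<ge> 0" and \<alpha>: "2 * \<beta> + \<alpha> \<ge> 0"
  shows "norm (of_real \<beta> * (z * deriv f z) + of_real \<alpha> * f z - of_real (\<alpha> + \<beta>) * z)
          \<le> (M - 1/M) * (\<beta> * (norm z / (1 - norm z)^2 - norm z) + \<alpha> * ((norm z)^2 / (1 - norm z)))"
proof -
  define a where "a = (\<lambda>n. (deriv ^^ n) f 0 / fact n)"
  define K where "K = M - 1/M"
  define r where "r = norm z"
  have r: "0 \<le> r" "r < 1" using z by (auto simp: r_def)
  have abd: "norm (a n) \<le> K" if "n \<ge> 2" for n
    unfolding a_def K_def by (rule coeff_bound[OF holf f0 f1 bd that])
  have K0: "K \<ge> 0" using abd[of 2] by (meson norm_ge_zero order_trans order_refl)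
  have a0: "a 0 = 0" by (simp add: a_def f0)
  have a1: "a 1 = 1" by (simp add: a_def f1)
  have s1: "(\<lambda>n. a n * z^n) sums f z"
    using holomorphic_power_series[OF holf, of z] z by (simp add: a_def)
  have s2: "(\<lambda>n. of_nat n * a n * z^n) sums (z * deriv f z)"
  proof -
    have hd: "deriv f holomorphic_on ball 0 1" by (rule holomorphic_deriv[OF holf open_ball])
    have "(\<lambda>n. (deriv ^^ n) (deriv f) 0 / fact n * (z - 0)^n) sums deriv f z"
      by (rule holomorphic_power_series[OF hd]) (use z in simp)
    moreover have "(deriv ^^ n) (deriv f) 0 / fact n = of_nat (Suc n) * a (Suc n)" for n
    proof -
      have "(deriv ^^ n) (deriv f) = (deriv ^^ Suc n) f" by (simp only: funpow_Suc_right o_def)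
      moreover have "(fact n :: complex) \<noteq> 0" "(1 + of_nat n :: complex) \<noteq> 0"
        by (simp, metis of_nat_Suc of_nat_eq_0_iff Zero_not_Suc)
      ultimately show ?thesis unfolding a_def fact_Suc of_nat_mult by (simp del: of_nat_Suc)
    qed
    ultimately have "(\<lambda>n. of_nat (Suc n) * a (Suc n) * z^n) sums deriv f z" by simp
    from sums_mult[OF this, of z] have "(\<lambda>n. of_nat (Suc n) * a (Suc n) * z^(Suc n)) sums (z * deriv f z)"
      by (simp add: mult_ac)
    then show ?thesis using sums_Suc_iff[of "\<lambda>n. of_nat n * a n * z^n"] by simp
  qed
  define c where "c = (\<lambda>n. of_real \<beta> * (of_nat n * a n * z^n) + of_real \<alpha> * (a n * z^n)
                        - (if n = 1 then of_real (\<alpha> + \<beta>) * z else 0))"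
  have sc: "c sums (of_real \<beta> * (z * deriv f z) + of_real \<alpha> * f z - of_real (\<alpha> + \<beta>) * z)"
    unfolding c_def
    by (intro sums_diff sums_add sums_mult s1 s2) (use sums_single[of 1 "\<lambda>_. of_real (\<alpha> + \<beta>) * z"] in simp)
  define d where "d = (\<lambda>n. if n < 2 then 0 else K * (\<beta> * real n + \<alpha>) * r^n)"
  have cd: "norm (c n) \<le> d n" for n
  proof (cases "n < 2")
    case True
    then have "n = 0 \<or> n = 1" by auto
    then show ?thesis using a0 a1 by (auto simp: c_def d_def algebra_simps)
  next
    case False
    have pos: "\<beta> * real n + \<alpha> \<ge> 0"
    proof -
      have "\<beta> * real n \<ge> \<beta> * 2" using False \<beta> by (intro mult_left_mono) auto
      then show ?thesis using \<alpha> by simp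
    qed
    have "c n = of_real (\<beta> * real n + \<alpha>) * a n * z^n" using False by (simp add: c_def algebra_simps)
    moreover have "norm (of_real (\<beta> * real n + \<alpha>) :: complex) = \<beta> * real n + \<alpha>"
      by (simp only: norm_of_real) (use pos in simp)
    ultimately have "norm (c n) = (\<beta> * real n + \<alpha>) * norm (a n) * r^n"
      by (simp only: norm_mult norm_power r_def)
    also have "\<dots> \<le> (\<beta> * real n + \<alpha>) * K * r^n"
      using abd[of n] False pos r by (intro mult_right_mono mult_left_mono) auto
    finally show ?thesis using False by (simp add: d_def mult_ac)
  qed
  define e where "e = (\<lambda>n. K * (\<beta> * real n + \<alpha>) * r^n)"
  have se: "e sums (K * (\<beta> * (r / (1 - r)^2) + \<alpha> * (1 / (1 - r))))"
  proof -
    have "(\<lambda>n. K * (\<beta> * (real n * r^n)) + K * (\<alpha> * r^n)) sums (K * (\<beta> * (r / (1 - r)^2)) + K * (\<alpha> * (1 / (1 - r))))"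
      using n_pow_sums[OF r] geometric_sums[of r] r by (intro sums_add sums_mult) auto
    then show ?thesis unfolding e_def by (simp add: algebra_simps)
  qed
  have "(\<lambda>i. e (i + 2)) sums (K * (\<beta> * (r / (1 - r)^2) + \<alpha> * (1 / (1 - r))) - (e 0 + e 1))"
    using se sums_iff_shift[of e 2] by (simp add: numeral_2_eq_2)
  moreover have "d (i + 2) = e (i + 2)" for i by (simp add: d_def e_def)
  ultimately have "(\<lambda>i. d (i + 2)) sums (K * (\<beta> * (r / (1 - r)^2) + \<alpha> * (1 / (1 - r))) - (e 0 + e 1))" by simp
  then have sd: "d sums (K * (\<beta> * (r / (1 - r)^2) + \<alpha> * (1 / (1 - r))) - (e 0 + e 1))"
    using sums_iff_shift[of d 2] by (simp add: d_def numeral_2_eq_2)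
  have val: "K * (\<beta> * (r / (1 - r)^2) + \<alpha> * (1 / (1 - r))) - (e 0 + e 1)
       = K * (\<beta> * (r / (1 - r)^2 - r) + \<alpha> * (r^2 / (1 - r)))"
    using r by (simp add: e_def field_simps power2_eq_square)
  have sn: "summable (\<lambda>n. norm (c n))"
    by (rule summable_comparison_test[OF _ sums_summable[OF sd]]) (use cd in auto)
  have "norm (of_real \<beta> * (z * deriv f z) + of_real \<alpha> * f z - of_real (\<alpha> + \<beta>) * z) = norm (suminf c)"
    using sums_unique[OF sc] by simp
  also have "\<dots> \<le> (\<Sum>n. norm (c n))" by (rule summable_norm[OF sn])
  also have "\<dots> \<le> suminf d" by (rule suminf_le[OF cd sn sums_summable[OF sd]])
  also have "\<dots> = K * (\<beta> * (r / (1 - r)^2 - r) + \<alpha> * (r^2 / (1 - r)))"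
    using sums_unique[OF sd] val by simp
  finally show ?thesis by (simp add: K_def r_def)
qed


lemma DF:
  fixes G H :: "complex \<Rightarrow> complex"
  assumes "G holomorphic_on ball 0 1" "H holomorphic_on ball 0 1" "z \<in> ball 0 1"
  shows "((\<lambda>w. cnj w * G w + H w) has_derivative
           (\<lambda>h. cnj h * G z + (cnj z * deriv G z + deriv H z) * h)) (at z)"
proof -
  have dG: "(G has_derivative (\<lambda>h. deriv G z * h)) (at z)"
    using has_field_derivative_imp_has_derivative[OF holomorphic_derivI[OF assms(1) open_ball assms(3)]] .
  have dH: "(H has_derivative (\<lambda>h. deriv H z * h)) (at z)"
    using has_field_derivative_imp_has_derivative[OF holomorphic_derivI[OF assms(2) open_ball assms(3)]] .
  have "((\<lambda>w. cnj w * G w + H w) has_derivative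
           (\<lambda>h. cnj z * (deriv G z * h) + cnj h * G z + deriv H z * h)) (at z)"
    by (intro has_derivative_add has_derivative_mult dG dH has_derivative_cnj has_derivative_ident)
  then show ?thesis by (simp add: algebra_simps)
qed

lemma wirt:
  fixes G H :: "complex \<Rightarrow> complex"
  assumes "G holomorphic_on ball 0 1" "H holomorphic_on ball 0 1" "z \<in> ball 0 1"
  shows "wirt_z (\<lambda>w. cnj w * G w + H w) z = cnj z * deriv G z + deriv H z"
    and "wirt_zbar (\<lambda>w. cnj w * G w + H w) z = G z"
    and "(\<lambda>w. cnj w * G w + H w) differentiable (at z)"
proof -
  have fd: "frechet_derivative (\<lambda>w. cnj w * G w + H w) (at z) = (\<lambda>h. cnj h * G z + (cnj z * deriv G z + deriv H z) * h)"
    using frechet_derivative_at[OF DF[OF assms]] by simp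
  show "wirt_z (\<lambda>w. cnj w * G w + H w) z = cnj z * deriv G z + deriv H z"
    unfolding wirt_z_def fd by (simp add: algebra_simps)
  show "wirt_zbar (\<lambda>w. cnj w * G w + H w) z = G z"
    unfolding wirt_zbar_def fd by (simp add: algebra_simps)
  show "(\<lambda>w. cnj w * G w + H w) differentiable (at z)"
    using DF[OF assms] by (auto simp: differentiable_def)
qed

lemma rho_pos:
  assumes "\<rho> \<in> {0<..<1}" and "\<forall>r\<in>{0<..<1}. rho3_eq M1 M2 r = 0 \<longrightarrow> r = \<rho>"
    and "0 \<le> r" "r < \<rho>"
  shows "rho3_eq M1 M2 r > 0"
proof (rule ccontr)
  assume "\<not> ?thesis"
  then have le: "rho3_eq M1 M2 r \<le> 0" by simp
  have r1: "r < 1" using assms by auto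
  have "continuous_on {0..r} (rho3_eq M1 M2)"
    unfolding rho3_eq_def using r1 by (intro continuous_intros) auto
  moreover have "rho3_eq M1 M2 0 = 1" by (simp add: rho3_eq_def)
  ultimately obtain x where x: "0 \<le> x" "x \<le> r" "rho3_eq M1 M2 x = 0"
    using IVT2'[of "rho3_eq M1 M2" r 0 0] le assms(3) by auto
  have "x \<noteq> 0" using x \<open>rho3_eq M1 M2 0 = 1\<close> by auto
  then have "x = \<rho>" using assms(2) x r1 by auto
  then show False using x assms by simp
qed


lemma main_ineq:
  fixes G H :: "complex \<Rightarrow> complex" and M1 M2 \<rho> :: real
  assumes hG: "G holomorphic_on ball 0 1" and hH: "H holomorphic_on ball 0 1"
    and G0: "G 0 = 0" and H0: "H 0 = 0" and G1: "deriv G 0 = 1" and H1: "deriv H 0 = 1"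
    and bG: "\<forall>z\<in>ball 0 1. cmod (G z) \<le> M1" and bH: "\<forall>z\<in>ball 0 1. cmod (H z) \<le> M2"
    and z: "norm z < 1" "z \<noteq> 0" and pos: "rho3_eq M1 M2 (norm z) > 0"
  shows "Re (cnj z * deriv G z + deriv H z) > norm (G z)"
proof -
  define r where "r = norm z"
  define A where "A = M1 - 1/M1"
  define B where "B = M2 - 1/M2"
  define P where "P = r / (1 - r)^2 - r"
  define Q where "Q = r^2 / (1 - r)"
  have r: "0 < r" "r < 1" using z by (auto simp: r_def)
  have e1: "norm (z * deriv G z - z) \<le> A * P"
    using est[OF hG G0 G1 bG z(1), of 1 0] by (simp add: A_def P_def r_def)
  have e2: "norm (G z - z) \<le> A * Q"
    using est[OF hG G0 G1 bG z(1), of 0 1] by (simp add: A_def Q_def r_def)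
  have e3: "norm (z * deriv H z - z) \<le> B * P"
    using est[OF hH H0 H1 bH z(1), of 1 0] by (simp add: B_def P_def r_def)
  have "norm (deriv H z - 1) = norm (z * deriv H z - z) / r"
  proof -
    have "z * deriv H z - z = z * (deriv H z - 1)" by (simp add: algebra_simps)
    then show ?thesis using r by (simp add: r_def norm_mult)
  qed
  then have "norm (deriv H z - 1) \<le> B * P / r" using e3 r by (simp add: divide_right_mono)
  moreover have "Re (deriv H z - 1) \<ge> - norm (deriv H z - 1)" using abs_Re_le_cmod[of "deriv H z - 1"] by linarith
  ultimately have i1: "Re (deriv H z) \<ge> 1 - B * P / r" by simp
  have "norm (z * deriv G z) \<le> r + A * P"
    using e1 norm_triangle_ineq2[of "z * deriv G z" z] by (simp add: r_def)
  moreover have "norm (cnj z * deriv G z) = norm (z * deriv G z)" by (simp add: norm_mult)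
  moreover have "Re (cnj z * deriv G z) \<ge> - norm (cnj z * deriv G z)" using abs_Re_le_cmod[of "cnj z * deriv G z"] by linarith
  ultimately have i2: "Re (cnj z * deriv G z) \<ge> - (r + A * P)" by linarith
  have i3: "norm (G z) \<le> r + A * Q"
    using e2 norm_triangle_ineq2[of "G z" z] by (simp add: r_def)
  have "rho3_eq M1 M2 r = 1 - B * P / r - A * (P + Q) - 2 * r"
  proof -
    have r1: "(1 - r) \<noteq> 0" using r by simp
    have r2: "(1 - r)^2 \<noteq> 0" using r by simp
    have p1: "P / r = (2 * r - r^2) / (1 - r)^2"
      using r r1 r2 unfolding P_def by (simp add: field_simps) algebra
    have p2: "P + Q = (3 - 2 * r) * r^2 / (1 - r)^2"
      using r r1 r2 unfolding P_def Q_def by (simp add: field_simps) algebra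
    show ?thesis unfolding rho3_eq_def A_def[symmetric] B_def[symmetric] p2[symmetric]
      by (simp add: p1[symmetric])
  qed
  moreover have "rho3_eq M1 M2 r > 0" using pos by (simp add: r_def)
  moreover have "Re (cnj z * deriv G z + deriv H z) = Re (cnj z * deriv G z) + Re (deriv H z)"
    by (simp only: plus_complex.sel)
  moreover have "A * (P + Q) = A * P + A * Q" by (simp add: distrib_left)
  ultimately show ?thesis using i1 i2 i3 by linarith
qed


lemma rho3_PQ:
  fixes r :: real assumes r: "0 < r" "r < 1"
  shows "rho3_eq M1 M2 r = 1 - (M2 - 1/M2) * ((r / (1 - r)^2 - r) / r)
          - (M1 - 1/M1) * ((r / (1 - r)^2 - r) + r^2 / (1 - r)) - 2 * r"
proof -
  define P where "P = r / (1 - r)^2 - r"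
  define Q where "Q = r^2 / (1 - r)"
  have r1: "(1 - r) \<noteq> 0" using r by simp
  have r2: "(1 - r)^2 \<noteq> 0" using r by simp
  have p1: "P / r = (2 * r - r^2) / (1 - r)^2"
    using r r1 r2 unfolding P_def by (simp add: field_simps) algebra
  have p2: "P + Q = (3 - 2 * r) * r^2 / (1 - r)^2"
    using r r1 r2 unfolding P_def Q_def by (simp add: field_simps) algebra
  show ?thesis unfolding rho3_eq_def p1[symmetric] p2[symmetric] unfolding P_def Q_def ..
qed

lemma star_ineq:
  fixes G H :: "complex \<Rightarrow> complex" and M1 M2 :: real
  assumes hG: "G holomorphic_on ball 0 1" and hH: "H holomorphic_on ball 0 1"
    and G0: "G 0 = 0" and H0: "H 0 = 0" and G1: "deriv G 0 = 1" and H1: "deriv H 0 = 1"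
    and bG: "\<forall>z\<in>ball 0 1. cmod (G z) \<le> M1" and bH: "\<forall>z\<in>ball 0 1. cmod (H z) \<le> M2"
    and z: "norm z < 1" "z \<noteq> 0" and pos: "rho3_eq M1 M2 (norm z) > 0"
  shows "norm ((z * (cnj z * deriv G z + deriv H z) - cnj z * G z) - (cnj z * G z + H z))
       < norm ((z * (cnj z * deriv G z + deriv H z) - cnj z * G z) + (cnj z * G z + H z))"
proof -
  define r where "r = norm z"
  define A where "A = M1 - 1/M1"
  define B where "B = M2 - 1/M2"
  define P where "P = r / (1 - r)^2 - r"
  define Q where "Q = r^2 / (1 - r)"
  have r: "0 < r" "r < 1" using z by (auto simp: r_def)
  define u1 where "u1 = z * deriv G z - z"
  define u2 where "u2 = G z - z"
  define v1 where "v1 = z * deriv H z + H z - 2 * z"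
  define v2 where "v2 = z * deriv H z - H z"
  have e1: "norm u1 \<le> A * P"
    using est[OF hG G0 G1 bG z(1), of 1 0] by (simp add: A_def P_def r_def u1_def)
  have e2: "norm u2 \<le> A * Q"
    using est[OF hG G0 G1 bG z(1), of 0 1] by (simp add: A_def Q_def r_def u2_def)
  have e4: "norm v1 \<le> B * (P + Q)"
    using est[OF hH H0 H1 bH z(1), of 1 1] by (simp add: B_def P_def Q_def r_def v1_def)
  have e5: "norm v2 \<le> B * (P - Q)"
    using est[OF hH H0 H1 bH z(1), of 1 "-1"] by (simp add: B_def P_def Q_def r_def v2_def)
  have zz: "cnj z * z = of_real (r^2)" using complex_norm_square[of z] by (simp add: r_def mult.commute)
  have NpF: "(z * (cnj z * deriv G z + deriv H z) - cnj z * G z) + (cnj z * G z + H z)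
        = of_real (r^2) + 2 * z + cnj z * u1 + v1"
    unfolding zz[symmetric] u1_def v1_def by (simp add: algebra_simps)
  have NmF: "(z * (cnj z * deriv G z + deriv H z) - cnj z * G z) - (cnj z * G z + H z)
        = - of_real (r^2) + cnj z * u1 + v2 - 2 * (cnj z * u2)"
    unfolding zz[symmetric] u1_def u2_def v2_def by (simp add: algebra_simps)
  have nc1: "norm (cnj z * u1) \<le> r * (A * P)" using e1 r by (simp add: norm_mult r_def mult_left_mono)
  have nc2: "norm (2 * (cnj z * u2)) \<le> 2 * (r * (A * Q))" using e2 r by (simp add: norm_mult r_def mult_left_mono)
  have a1: "norm (of_real (r^2) + 2 * z) \<ge> 2 * r - r^2"
  proof -
    have "norm (2 * z) \<le> norm (of_real (r^2) + 2 * z) + norm (of_real (r^2) :: complex)"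
      using norm_triangle_ineq4[of "of_real (r^2) + 2 * z" "of_real (r^2)"] by simp
    moreover have "norm (of_real (r^2) :: complex) = r^2" using r by (simp only: norm_of_real) simp
    moreover have "norm (2 * z) = 2 * r" by (simp add: r_def norm_mult)
    ultimately show ?thesis by linarith
  qed
  have lo: "norm (of_real (r^2) + 2 * z + cnj z * u1 + v1) \<ge> 2 * r - r^2 - r * (A * P) - B * (P + Q)"
  proof -
    have "norm (of_real (r^2) + 2 * z) \<le> norm (of_real (r^2) + 2 * z + cnj z * u1 + v1) + norm (cnj z * u1) + norm v1"
      using norm_triangle_ineq4[of "of_real (r^2) + 2 * z + cnj z * u1 + v1" "cnj z * u1 + v1"]
        norm_triangle_ineq[of "cnj z * u1" v1] by (simp add: algebra_simps)
    then show ?thesis using a1 nc1 e4 by linarith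
  qed
  have hi: "norm (- of_real (r^2) + cnj z * u1 + v2 - 2 * (cnj z * u2)) \<le> r^2 + r * (A * P) + B * (P - Q) + 2 * (r * (A * Q))"
  proof -
    have "norm (- of_real (r^2) + cnj z * u1 + v2 - 2 * (cnj z * u2)) \<le>
        norm (- of_real (r^2) :: complex) + norm (cnj z * u1) + norm v2 + norm (2 * (cnj z * u2))"
      by (rule order_trans[OF norm_triangle_ineq4] add_mono order_trans[OF norm_triangle_ineq] norm_triangle_ineq order_refl)+
    moreover have "norm (- of_real (r^2) :: complex) = r^2" by (simp only: norm_minus_cancel norm_of_real) simp
    ultimately show ?thesis using nc1 nc2 e5 by linarith
  qed
  have rho: "rho3_eq M1 M2 r = 1 - B * P / r - A * (P + Q) - 2 * r"
    using rho3_PQ[OF r, of M1 M2] by (simp add: A_def B_def P_def Q_def)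
  have f1: "2 * r * rho3_eq M1 M2 r > 0" using pos r by (simp add: r_def)
  have f2: "2 * r * rho3_eq M1 M2 r = 2 * r - 2 * (B * P) - 2 * (r * (A * P)) - 2 * (r * (A * Q)) - 4 * r^2"
    unfolding rho using r by (simp add: field_simps power2_eq_square)
  have f3: "B * (P + Q) = B * P + B * Q" "B * (P - Q) = B * P - B * Q" by (simp_all add: algebra_simps)
  have f4: "r^2 \<ge> 0" by simp
  have "norm (- of_real (r^2) + cnj z * u1 + v2 - 2 * (cnj z * u2)) < norm (of_real (r^2) + 2 * z + cnj z * u1 + v1)"
    using f1 f2 f3 f4 lo hi by argo
  then show ?thesis unfolding NpF NmF .
qed

lemma re_pos:
  fixes N F :: complex
  assumes "norm (N - F) < norm (N + F)"
  shows "F \<noteq> 0" "Re (N / F) > 0"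
proof -
  show F: "F \<noteq> 0" using assms by auto
  have "(norm (N - F))^2 < (norm (N + F))^2" using assms by (intro power_strict_mono) auto
  then have "Re N * Re F + Im N * Im F > 0" unfolding cmod_power2 by (simp add: power2_eq_square algebra_simps)
  then show "Re (N / F) > 0" using F by (simp add: Re_divide')
qed


lemma univ:
  fixes G H :: "complex \<Rightarrow> complex" and \<rho> :: real
  assumes hG: "G holomorphic_on ball 0 1" and hH: "H holomorphic_on ball 0 1"
    and \<rho>: "0 < \<rho>" "\<rho> < 1"
    and key: "\<forall>z\<in>ball 0 \<rho>. Re (cnj z * deriv G z + deriv H z) > norm (G z)"
  shows "inj_on (\<lambda>z. cnj z * G z + H z) (ball 0 \<rho>)"
proof (rule inj_onI, rule ccontr)
  fix z1 z2 assume z1: "z1 \<in> ball 0 \<rho>" and z2: "z2 \<in> ball 0 \<rho>"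
    and eq: "cnj z1 * G z1 + H z1 = cnj z2 * G z2 + H z2" and ne: "z1 \<noteq> z2"
  define L where "L = z2 - z1"
  have L0: "L \<noteq> 0" using ne by (simp add: L_def)
  define \<gamma> where "\<gamma> = (\<lambda>t::real. z1 + of_real t * L)"
  define F where "F = (\<lambda>w. cnj w * G w + H w)"
  define \<phi> where "\<phi> = (\<lambda>t. Re (cnj L * F (\<gamma> t)))"
  have \<gamma>in: "\<gamma> t \<in> ball 0 \<rho>" if "0 \<le> t" "t \<le> 1" for t
  proof -
    have "(1 - t) *\<^sub>R z1 + t *\<^sub>R z2 \<in> ball 0 \<rho>"
      using convexD[OF convex_ball z1 z2, of "1 - t" t] that by simp
    moreover have "(1 - t) *\<^sub>R z1 + t *\<^sub>R z2 = \<gamma> t"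
      by (simp add: \<gamma>_def L_def scaleR_conv_of_real algebra_simps)
    ultimately show ?thesis by simp
  qed
  have der: "\<exists>y. DERIV \<phi> t :> y \<and> y > 0" if t: "0 \<le> t" "t \<le> 1" for t
  proof -
    define w where "w = \<gamma> t"
    have w: "w \<in> ball 0 \<rho>" using \<gamma>in[OF t] by (simp add: w_def)
    then have w1: "w \<in> ball 0 1" using \<rho> by auto
    define y where "y = Re (cnj L * (cnj L * G w + (cnj w * deriv G w + deriv H w) * L))"
    have dg: "(\<gamma> has_derivative (\<lambda>h. of_real h * L)) (at t)"
      unfolding \<gamma>_def by (auto intro!: derivative_eq_intros)
    have dF: "(F has_derivative (\<lambda>h. cnj h * G w + (cnj w * deriv G w + deriv H w) * h)) (at (\<gamma> t))"
      unfolding F_def w_def[symmetric] by (rule DF[OF hG hH w1])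
    have "(\<phi> has_derivative (\<lambda>h. Re (cnj L * (cnj (of_real h * L) * G w + (cnj w * deriv G w + deriv H w) * (of_real h * L))))) (at t)"
      unfolding \<phi>_def
      by (intro has_derivative_Re has_derivative_mult_right has_derivative_compose[OF dg dF])
    moreover have "(\<lambda>h. Re (cnj L * (cnj (of_real h * L) * G w + (cnj w * deriv G w + deriv H w) * (of_real h * L)))) = (\<lambda>h. y * h)"
    proof
      fix h :: real
      have "cnj L * (cnj (of_real h * L) * G w + (cnj w * deriv G w + deriv H w) * (of_real h * L))
          = of_real h * (cnj L * (cnj L * G w + (cnj w * deriv G w + deriv H w) * L))"
        by (simp add: algebra_simps)
      note e = this
      have r: "Re (of_real h * (cnj L * (cnj L * G w + (cnj w * deriv G w + deriv H w) * L)))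
          = h * Re (cnj L * (cnj L * G w + (cnj w * deriv G w + deriv H w) * L))" by simp
      show "Re (cnj L * (cnj (of_real h * L) * G w + (cnj w * deriv G w + deriv H w) * (of_real h * L))) = y * h"
        unfolding e y_def r by (rule mult.commute)
    qed
    ultimately have "DERIV \<phi> t :> y" by (simp add: has_field_derivative_def)
    moreover have "y > 0"
    proof -
      have LL: "cnj L * L = of_real ((norm L)^2)" using complex_norm_square[of L] by (simp add: mult.commute)
      have "y = Re (cnj L * cnj L * G w) + (norm L)^2 * Re (cnj w * deriv G w + deriv H w)"
      proof -
        have "cnj L * (cnj L * G w + (cnj w * deriv G w + deriv H w) * L)
            = cnj L * cnj L * G w + (cnj L * L) * (cnj w * deriv G w + deriv H w)" by (simp add: algebra_simps)
        then show ?thesis unfolding y_def LL by simp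
      qed
      moreover have "Re (cnj L * cnj L * G w) \<ge> - ((norm L)^2 * norm (G w))"
        using abs_Re_le_cmod[of "cnj L * cnj L * G w"] by (simp add: norm_mult power2_eq_square)
      moreover have "(norm L)^2 * Re (cnj w * deriv G w + deriv H w) > (norm L)^2 * norm (G w)"
        using key w L0 by (intro mult_strict_left_mono) auto
      ultimately show ?thesis by linarith
    qed
    ultimately show ?thesis by blast
  qed
  have "\<phi> 0 < \<phi> 1" by (rule DERIV_pos_imp_increasing[OF zero_less_one der])
  moreover have "\<phi> 0 = \<phi> 1"
  proof -
    have g: "\<gamma> 0 = z1" "\<gamma> 1 = z2" by (simp_all add: \<gamma>_def L_def)
    have "F z1 = F z2" using eq by (simp add: F_def)
    then show ?thesis unfolding \<phi>_def g by simp
  qed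
  ultimately show False by simp
qed


theorem theorem2p4:
  fixes G H :: "complex \<Rightarrow> complex" and M1 M2 \<rho> :: real
  assumes "M1 > 0" and "M2 > 0"
    and "G holomorphic_on ball 0 1" and "H holomorphic_on ball 0 1"
    and "\<exists>z\<in>ball 0 1. G z \<noteq> 0"
    and "G 0 = 0" and "H 0 = 0" and "deriv G 0 = 1" and "deriv H 0 = 1"
    and "\<forall>z\<in>ball 0 1. cmod (G z) \<le> M1" and "\<forall>z\<in>ball 0 1. cmod (H z) \<le> M2"
    and "\<rho> \<in> {0<..<1}" and "rho3_eq M1 M2 \<rho> = 0"
    and "\<forall>r\<in>{0<..<1}. rho3_eq M1 M2 r = 0 \<longrightarrow> r = \<rho>"
  shows "sense_preserving_on (\<lambda>z. cnj z * G z + H z) (ball 0 \<rho>)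
       \<and> inj_on (\<lambda>z. cnj z * G z + H z) (ball 0 \<rho>)
       \<and> fully_starlike_in (\<lambda>z. cnj z * G z + H z) \<rho>"
proof -
  note hG = assms(3) and hH = assms(4) and G0 = assms(6) and H0 = assms(7)
    and G1 = assms(8) and H1 = assms(9) and bG = assms(10) and bH = assms(11)
  have \<rho>: "0 < \<rho>" "\<rho> < 1" using assms(12) by auto
  have in1: "z \<in> ball 0 1" if "z \<in> ball 0 \<rho>" for z :: complex using that \<rho> by auto
  have pos: "rho3_eq M1 M2 (norm z) > 0" if "z \<in> ball 0 \<rho>" for z :: complex
    by (rule rho_pos[OF assms(12) assms(14)]) (use that in auto)
  have key: "\<forall>z\<in>ball 0 \<rho>. Re (cnj z * deriv G z + deriv H z) > norm (G z)"
  proof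
    fix z :: complex assume z: "z \<in> ball 0 \<rho>"
    show "Re (cnj z * deriv G z + deriv H z) > norm (G z)"
    proof (cases "z = 0")
      case True then show ?thesis using G0 H1 by simp
    next
      case False
      show ?thesis by (rule main_ineq[OF hG hH G0 H0 G1 H1 bG bH _ False pos[OF z]]) (use in1[OF z] in simp)
    qed
  qed
  have sp: "sense_preserving_on (\<lambda>z. cnj z * G z + H z) (ball 0 \<rho>)"
    unfolding sense_preserving_on_def
  proof
    fix z :: complex assume z: "z \<in> ball 0 \<rho>"
    note W = wirt[OF hG hH in1[OF z]]
    have "norm (G z) < Re (cnj z * deriv G z + deriv H z)" using key z by auto
    also have "\<dots> \<le> norm (cnj z * deriv G z + deriv H z)" by (rule complex_Re_le_cmod)
    finally have "(norm (G z))^2 < (norm (cnj z * deriv G z + deriv H z))^2"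
      by (intro power_strict_mono) auto
    then show "(\<lambda>z. cnj z * G z + H z) differentiable at z \<and> 0 < jacobian (\<lambda>z. cnj z * G z + H z) z"
      using W by (simp add: jacobian_def)
  qed
  have inj: "inj_on (\<lambda>z. cnj z * G z + H z) (ball 0 \<rho>)" by (rule univ[OF hG hH \<rho> key])
  have st: "norm ((z * (cnj z * deriv G z + deriv H z) - cnj z * G z) - (cnj z * G z + H z))
       < norm ((z * (cnj z * deriv G z + deriv H z) - cnj z * G z) + (cnj z * G z + H z))"
    if "z \<in> ball 0 \<rho>" "z \<noteq> 0" for z :: complex
    by (rule star_ineq[OF hG hH G0 H0 G1 H1 bG bH _ that(2) pos[OF that(1)]]) (use in1[OF that(1)] in simp)
  have fs: "fully_starlike_in (\<lambda>z. cnj z * G z + H z) \<rho>"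
    unfolding fully_starlike_in_def
  proof (intro conjI ballI allI impI)
    show "sense_preserving_on (\<lambda>z. cnj z * G z + H z) (ball 0 \<rho>)" by (rule sp)
    show "cnj 0 * G 0 + H 0 = 0" using H0 by simp
    fix z :: complex assume "z \<in> ball 0 \<rho> - {0}"
    then show "cnj z * G z + H z \<noteq> 0" using re_pos(1)[OF st] by auto
  next
    fix s and z :: complex assume s: "s \<in> {0<..<\<rho>}" and zs: "cmod z = s"
    then have z: "z \<in> ball 0 \<rho>" "z \<noteq> 0" by auto
    note W = wirt[OF hG hH in1[OF z(1)]]
    show "0 < Re ((z * wirt_z (\<lambda>z. cnj z * G z + H z) z - cnj z * wirt_zbar (\<lambda>z. cnj z * G z + H z) z) /
              (cnj z * G z + H z))"
      unfolding W(1,2) by (rule re_pos(2)[OF st[OF z]])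
  qed
  show ?thesis using sp inj fs by blast
qed


end
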